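(* Let $G=(V,E)$ be a graph with a partition $(V_1,V_2)$ of $V$ such that $G[V_1]$ and $G[V_2]$ are $P_5$-free. Let $X\subseteq V_2$ be such that no vertex of $X$ has a neighbour in $V_1$ and exactly one vertex of $V_2\setminus X$ has a neighbour in $X$. If there exists a set $F\subseteq V_2$ such that $G\setminus F$ is $P_5$-free and $F\cap X\neq\emptyset$, then there exists a set $F'\subseteq V_2$ such that $G\setminus F'$ is $P_5$-free, $F'\cap X=\emptyset$, and $|F'|\le|F|$.
   Context: Graphs are finite, simple and undirected. A $P_5$ is a path on $5$ vertices (as a not necessarily induced subgraph); a graph is $P_5$-free if it contains no $P_5$. $G[X]$ denotes the subgraph induced by $X$, and $G\setminus F=G[V\setminus F]$. *)

theory Defs
  imports Main
begin

definition simple_graph :: "'a set \<Rightarrow> ('a \<Rightarrow> 'a \<Rightarrow> bool) \<Rightarrow> bool" where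
  "simple_graph V E \<longleftrightarrow> finite V \<and> (\<forall>u v. E u v \<longrightarrow> E v u)
     \<and> (\<forall>v. \<not> E v v) \<and> (\<forall>u v. E u v \<longrightarrow> u \<in> V \<and> v \<in> V)"

text \<open>The induced subgraph G[S] contains a P5 (not necessarily induced):
five distinct vertices of S, consecutive ones adjacent.\<close>
definition has_P5 :: "'a set \<Rightarrow> ('a \<Rightarrow> 'a \<Rightarrow> bool) \<Rightarrow> bool" where
  "has_P5 S E \<longleftrightarrow> (\<exists>v1 v2 v3 v4 v5.
      v1 \<in> S \<and> v2 \<in> S \<and> v3 \<in> S \<and> v4 \<in> S \<and> v5 \<in> S \<and>
      distinct [v1, v2, v3, v4, v5] \<and>
      E v1 v2 \<and> E v2 v3 \<and> E v3 v4 \<and> E v4 v5)"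

definition P5_free :: "'a set \<Rightarrow> ('a \<Rightarrow> 'a \<Rightarrow> bool) \<Rightarrow> bool" where
  "P5_free S E \<longleftrightarrow> \<not> has_P5 S E"

end

theory Submission
  imports Defs
begin

theorem lemma7:
  fixes V V1 V2 X F :: "'a set" and E :: "'a \<Rightarrow> 'a \<Rightarrow> bool"
  assumes graph: "simple_graph V E"
    and part: "V1 \<union> V2 = V" "V1 \<inter> V2 = {}"
    and free1: "P5_free V1 E" and free2: "P5_free V2 E"
    and X_sub: "X \<subseteq> V2"
    and X_no_V1: "\<forall>x\<in>X. \<forall>u\<in>V1. \<not> E x u"
    and one_attach: "\<exists>!w. w \<in> V2 - X \<and> (\<exists>x\<in>X. E w x)"
    and F_sub: "F \<subseteq> V2" and F_free: "P5_free (V - F) E"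
    and F_X: "F \<inter> X \<noteq> {}"
  shows "\<exists>F'. F' \<subseteq> V2 \<and> P5_free (V - F') E \<and> F' \<inter> X = {} \<and> card F' \<le> card F"
proof -
  obtain w where w0: "w \<in> V2 - X \<and> (\<exists>x\<in>X. E w x)"
    and wu0: "\<forall>y. y \<in> V2 - X \<and> (\<exists>x\<in>X. E y x) \<longrightarrow> y = w"
    using one_attach by (elim ex1E) blast
  have w: "w \<in> V2 - X" "\<exists>x\<in>X. E w x" using w0 by auto
  have wu: "\<And>y. y \<in> V2 - X \<Longrightarrow> (\<exists>x\<in>X. E y x) \<Longrightarrow> y = w"
    using wu0 by blast
  have finV: "finite V" using graph unfolding simple_graph_def by simp
  have sym: "\<And>u v. E u v \<Longrightarrow> E v u" using graph unfolding simple_graph_def by simp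
  have inV: "\<And>u v. E u v \<Longrightarrow> u \<in> V \<and> v \<in> V" using graph unfolding simple_graph_def by simp
  define F' where "F' = (F - X) \<union> {w}"
  have finF: "finite F" 
  proof (rule finite_subset[OF _ finV])
    show "F \<subseteq> V" using F_sub part(1) by blast
  qed
  have "card (F - X) < card F"
    using F_X finF by (intro psubset_card_mono) auto
  moreover have "card F' \<le> card (F - X) + 1"
    unfolding F'_def using card_Un_le[of "F - X" "{w}"] by simp
  ultimately have c: "card F' \<le> card F" by linarith
  have step: "b \<in> X" if "a \<in> X" "b \<in> V - F'" "E a b \<or> E b a" for a b
  proof (rule ccontr)
    assume nb: "b \<notin> X"
    have Eab: "E a b" "E b a" using that(3) sym by blast+
    have "b \<in> V" using inV Eab by blast
    show False
    proof (cases "b \<in> V1")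
      case True then show ?thesis using X_no_V1 that(1) Eab by blast
    next
      case False
      then have "b \<in> V2 - X" using \<open>b \<in> V\<close> part nb by blast
      then have "b = w" using wu Eab that(1) by blast
      then show ?thesis using that(2) unfolding F'_def by blast
    qed
  qed
  have "P5_free (V - F') E"
    unfolding P5_free_def has_P5_def
  proof (intro notI, elim exE conjE)
    fix v1 v2 v3 v4 v5
    assume h: "v1 \<in> V - F'" "v2 \<in> V - F'" "v3 \<in> V - F'" "v4 \<in> V - F'" "v5 \<in> V - F'"
      "distinct [v1, v2, v3, v4, v5]" "E v1 v2" "E v2 v3" "E v3 v4" "E v4 v5"
    show False
    proof (cases "v1 \<in> X \<or> v2 \<in> X \<or> v3 \<in> X \<or> v4 \<in> X \<or> v5 \<in> X")
      case True
      have "v1 \<in> X \<and> v2 \<in> X \<and> v3 \<in> X \<and> v4 \<in> X \<and> v5 \<in> X"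
      proof -
        have a: "v1 \<in> X \<longleftrightarrow> v2 \<in> X" using step h(1,2,7) by blast
        have b: "v2 \<in> X \<longleftrightarrow> v3 \<in> X" using step h(2,3,8) by blast
        have c: "v3 \<in> X \<longleftrightarrow> v4 \<in> X" using step h(3,4,9) by blast
        have d: "v4 \<in> X \<longleftrightarrow> v5 \<in> X" using step h(4,5,10) by blast
        show ?thesis using a b c d True by blast
      qed
      then have "has_P5 V2 E" unfolding has_P5_def using h X_sub
        by (intro exI[of _ v1] exI[of _ v2] exI[of _ v3] exI[of _ v4] exI[of _ v5]) auto
      then show False using free2 unfolding P5_free_def by blast
    next
      case False
      then have "has_P5 (V - F) E" unfolding has_P5_def using h unfolding F'_def
        by (intro exI[of _ v1] exI[of _ v2] exI[of _ v3] exI[of _ v4] exI[of _ v5]) auto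
      then show False using F_free unfolding P5_free_def by blast
    qed
  qed
  moreover have "F' \<subseteq> V2" "F' \<inter> X = {}" using F_sub w unfolding F'_def by blast+
  ultimately show ?thesis using c by blast
qed

end
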